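(* Let $\hat A$ be a collection of pairwise disjoint nonempty connected subsets of $S^1$ with $|\hat A|\ge 3$ such that $\bigcup_{J\in\hat A}J$ is dense in $S^1$ and each $J\in\hat A$ is either a single point or an open interval. Let $h:\hat A\to\hat A$ be an order preserving bijection, and let $g_1,g_2:S^1\to S^1$ be orientation preserving homeomorphisms both compatible with $h$. Then $g_1$ and $g_2$ have the same rotation number.
   Context: A bijection $h:\hat A\to\hat A$ of a collection of pairwise disjoint subsets of $S^1$ is order preserving if there is a homeomorphism $g:S^1\to S^1$ with $g(J)=h(J)$ for all $J\in\hat A$; such $g$ is called compatible with $h$. The rotation number of an orientation preserving homeomorphism $g$ of $S^1$ is $\lim_{n\to\infty}G^n(x)/n \pmod 1$, where $G:\mathbb{R}\to\mathbb{R}$ is any lift of $g$ under $\theta\mapsto e^{2\pi i\theta}$ and $x\in\mathbb{R}$ is arbitrary (this is well defined modulo $1$). *)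

theory Defs
  imports "HOL-Analysis.Analysis"
begin

abbreviation S1 :: "complex set" where
  "S1 \<equiv> sphere 0 1"

definition expc :: "real \<Rightarrow> complex" where
  "expc x = cis (2 * pi * x)"

definition open_arc :: "complex set \<Rightarrow> bool" where
  "open_arc J \<longleftrightarrow> (\<exists>a b. a < b \<and> b - a < 1 \<and> J = expc ` {a<..<b})"

definition is_lift :: "(complex \<Rightarrow> complex) \<Rightarrow> (real \<Rightarrow> real) \<Rightarrow> bool" where
  "is_lift g G \<longleftrightarrow> continuous_on UNIV G \<and> (\<forall>x. g (expc x) = expc (G x))"

definition circle_homeo :: "(complex \<Rightarrow> complex) \<Rightarrow> bool" where
  "circle_homeo g \<longleftrightarrow> (\<exists>g'. homeomorphism S1 S1 g g')"

definition orientation_preserving :: "(complex \<Rightarrow> complex) \<Rightarrow> bool" where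
  "orientation_preserving g \<longleftrightarrow> circle_homeo g \<and> (\<exists>G. is_lift g G \<and> strict_mono G)"

text \<open>Rotation number: lim G^n(x)/n (mod 1), for an arbitrary lift G and point x (here x = 0).\<close>
definition rotation_number :: "(complex \<Rightarrow> complex) \<Rightarrow> real" where
  "rotation_number g = frac (lim (\<lambda>n. (((SOME G. is_lift g G) ^^ n) 0) / real n))"

definition compatible :: "(complex \<Rightarrow> complex) \<Rightarrow> complex set set \<Rightarrow> (complex set \<Rightarrow> complex set) \<Rightarrow> bool" where
  "compatible g A h \<longleftrightarrow> circle_homeo g \<and> (\<forall>J\<in>A. g ` J = h J)"

definition order_preserving :: "complex set set \<Rightarrow> (complex set \<Rightarrow> complex set) \<Rightarrow> bool" where
  "order_preserving A h \<longleftrightarrow> bij_betw h A A \<and> (\<exists>g. compatible g A h)"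

end

theory Submission
  imports Defs
begin

lemma i_cancel: "\<i> * (u::complex) = \<i> * v + w * \<i> \<longleftrightarrow> u = v + w"
proof -
  have "\<i> * v + w * \<i> = \<i> * (v + w)" by (simp add: algebra_simps)
  then show ?thesis by simp
qed

lemma expc_eq: "expc x = expc y \<longleftrightarrow> (\<exists>n::int. x = y + of_int n)"
proof -
  have "expc x = expc y \<longleftrightarrow> exp (\<i> * complex_of_real (2*pi*x)) = exp (\<i> * complex_of_real (2*pi*y))"
    by (simp add: expc_def cis_conv_exp)
  also have "\<dots> \<longleftrightarrow> (\<exists>n::int. \<i> * complex_of_real (2*pi*x) = \<i> * complex_of_real (2*pi*y) + (of_int (2 * n) * pi) * \<i>)"
    by (rule exp_eq)
  also have "\<dots> \<longleftrightarrow> (\<exists>n::int. x = y + of_int n)"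
  proof (intro ex_cong1)
    fix n :: int
    have "\<i> * complex_of_real (2*pi*x) = \<i> * complex_of_real (2*pi*y) + (of_int (2 * n) * pi) * \<i>
       \<longleftrightarrow> complex_of_real (2*pi*x) = complex_of_real (2*pi*y) + complex_of_real (of_int (2 * n) * pi)"
      using i_cancel by simp
    also have "\<dots> \<longleftrightarrow> 2*pi*x = 2*pi*(y+n)" by (simp only: of_real_add[symmetric] of_real_eq_iff) (simp add: algebra_simps)
    also have "\<dots> \<longleftrightarrow> x = y + n" by simp
    finally show "(\<i> * complex_of_real (2*pi*x) = \<i> * complex_of_real (2*pi*y) + (of_int (2 * n) * pi) * \<i>) = (x = y + of_int n)" .
  qed
  finally show ?thesis .
qed

lemma expc_shift[simp]: "expc (x + of_int n) = expc x"
  using expc_eq by blast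

lemma expc_shift1[simp]: "expc (x + 1) = expc x"
  using expc_shift[of x 1] by simp

lemma expc_S1[simp]: "expc x \<in> S1"
  by (simp add: expc_def)

lemma expc_surj: "z \<in> S1 \<Longrightarrow> \<exists>x. expc x = z"
proof -
  assume z: "z \<in> S1"
  then have "z \<noteq> 0" by auto
  have "expc (Arg z / (2*pi)) = cis (Arg z)" by (simp add: expc_def)
  also have "\<dots> = sgn z" using cis_Arg[OF \<open>z \<noteq> 0\<close>] .
  also have "\<dots> = z" using z by (simp add: sgn_div_norm)
  finally show ?thesis by blast
qed

lemma circle_homeo_inj: "circle_homeo g \<Longrightarrow> inj_on g S1"
  unfolding circle_homeo_def by (metis homeomorphism_apply1 inj_on_inverseI)
lemma lift_int_diff:
  assumes "is_lift g G" shows "\<exists>n::int. G (x+1) = G x + of_int n"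
proof -
  have "expc (G (x+1)) = expc (G x)"
    using assms unfolding is_lift_def by (metis expc_shift1)
  then show ?thesis using expc_eq by blast
qed

lemma lift_shift1:
  assumes L: "is_lift g G" and sm: "strict_mono G" and inj: "inj_on g S1"
  shows "G (x+1) = G x + 1"
proof -
  obtain n :: int where n: "G (x+1) = G x + of_int n" using lift_int_diff[OF L] by blast
  have "G x < G (x+1)" using sm by (simp add: strict_mono_less)
  with n have "n \<ge> 1" by simp
  moreover have "\<not> n \<ge> 2"
  proof
    assume "n \<ge> 2"
    have cont: "continuous_on {x..x+1} G"
      using L unfolding is_lift_def by (meson continuous_on_subset subset_UNIV)
    have "G x \<le> G x + 1" "G x + 1 \<le> G (x+1)" using n \<open>n \<ge> 2\<close> by auto
    then obtain t where t: "x \<le> t" "t \<le> x+1" "G t = G x + 1"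
      using IVT'[OF \<open>G x \<le> G x + 1\<close> \<open>G x + 1 \<le> G (x+1)\<close> _ cont] by auto
    have "t \<noteq> x" using t by auto
    have "t \<noteq> x + 1" using t n \<open>n \<ge> 2\<close> by auto
    have "g (expc t) = g (expc x)"
      using L t(3) unfolding is_lift_def by (metis expc_shift1)
    then have "expc t = expc x" using inj unfolding inj_on_def by (meson expc_S1)
    then obtain m :: int where m: "t = x + of_int m" using expc_eq by blast
    with t \<open>t \<noteq> x\<close> \<open>t \<noteq> x+1\<close> have "0 < m" "m < 1" by auto
    then show False by simp
  qed
  ultimately have "n = 1" by simp
  with n show ?thesis by simp
qed

lemma shift_nat:
  fixes G :: "real \<Rightarrow> real" assumes "\<And>x. G (x+1) = G x + 1" shows "G (x + real n) = G x + real n"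
proof (induction n)
  case 0 then show ?case by simp
next
  case (Suc n)
  have "G (x + real (Suc n)) = G ((x + real n) + 1)" by (simp add: algebra_simps)
  also have "\<dots> = G (x + real n) + 1" by (rule assms)
  finally show ?case using Suc by simp
qed

lemma shift_int:
  fixes G :: "real \<Rightarrow> real" assumes "\<And>x. G (x+1) = G x + 1" shows "G (x + of_int n) = G x + of_int n"
proof (cases "n \<ge> 0")
  case True
  then obtain m where m: "n = int m" using nonneg_eq_int by blast
  show ?thesis using shift_nat[where G=G, OF assms, of x m] m by simp
next
  case False
  then obtain m where m: "n = - int m" by (metis nonpos_int_cases linorder_not_le less_imp_le)
  have "G (x + of_int n + real m) = G (x + of_int n) + real m"
    using shift_nat[where G=G, OF assms] by blast
  then show ?thesis using m by simp
qed

lemma iter_shift: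
  fixes G :: "real \<Rightarrow> real" assumes "\<And>x. G (x+1) = G x + 1" shows "(G^^k) (x + of_int n) = (G^^k) x + of_int n"
  using shift_int[where G=G, OF assms] by (induction k) auto

lemma iter_shift1:
  fixes G :: "real \<Rightarrow> real" assumes "\<And>x. G (x+1) = G x + 1" shows "(G^^k) (x + 1) = (G^^k) x + 1"
  using iter_shift[where G=G, OF assms, of k x 1] by simp

lemma iter_mono:
  assumes "mono (G::real\<Rightarrow>real)" shows "mono (G^^k)"
  using assms by (induction k) (auto simp: mono_def)

lemma lift_unique:
  assumes L1: "is_lift g G" and L2: "is_lift g G'"
  shows "\<exists>c::int. \<forall>x. G' x = G x + of_int c"
proof -
  define d where "d x = G' x - G x" for x
  have dint: "\<exists>n::int. d x = of_int n" for x
  proof -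
    have "expc (G' x) = expc (G x)" using L1 L2 unfolding is_lift_def by metis
    then obtain n :: int where "G' x = G x + of_int n" using expc_eq by blast
    then show ?thesis unfolding d_def by auto
  qed
  have dcont: "continuous_on S d" for S
    using L1 L2 unfolding is_lift_def d_def
    by (intro continuous_on_diff; meson continuous_on_subset subset_UNIV)
  obtain c :: int where c: "d 0 = of_int c" using dint by blast
  have "d y = d 0" for y
  proof (rule ccontr)
    assume ne: "d y \<noteq> d 0"
    define a where "a = min 0 y"
    define b where "b = max 0 y"
    have ab: "a \<le> b" unfolding a_def b_def by auto
    have "d a \<noteq> d b" using ne unfolding a_def b_def by (auto simp: min_def max_def)
    obtain na nb :: int where na: "d a = of_int na" and nb: "d b = of_int nb" using dint by blast
    show False
    proof (cases "na < nb")
      case True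
      then have "d a \<le> d a + 1/2" "d a + 1/2 \<le> d b" using na nb by auto
      then obtain t where "d t = d a + 1/2" using IVT'[OF _ _ ab dcont] by blast
      moreover obtain nt :: int where "d t = of_int nt" using dint by blast
      ultimately have "of_int nt = (of_int na + 1/2 :: real)" using na by simp
      then have "2 * of_int nt = (2 * of_int na + 1 :: real)" by simp
      then have "2 * nt = 2 * na + 1" by linarith
      then show False by presburger
    next
      case False
      then have "nb < na" using \<open>d a \<noteq> d b\<close> na nb by auto
      then have "d b \<le> d b + 1/2" "d b + 1/2 \<le> d a" using na nb by auto
      then obtain t where "d t = d b + 1/2" using IVT2'[OF _ _ ab dcont] by blast
      moreover obtain nt :: int where "d t = of_int nt" using dint by blast
      ultimately have "of_int nt = (of_int nb + 1/2 :: real)" using nb by simp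
      then have "2 * of_int nt = (2 * of_int nb + 1 :: real)" by simp
      then have "2 * nt = 2 * nb + 1" by linarith
      then show False by presburger
    qed
  qed
  then show ?thesis using c unfolding d_def by (metis add.commute diff_add_cancel)
qed

definition R :: "complex set set \<Rightarrow> real \<Rightarrow> real \<Rightarrow> bool" where
  "R A x y \<longleftrightarrow> (\<exists>J\<in>A. \<forall>t. min x y \<le> t \<and> t \<le> max x y \<longrightarrow> expc t \<in> J)"

lemma disj_eq: "disjoint A \<Longrightarrow> J \<in> A \<Longrightarrow> J' \<in> A \<Longrightarrow> z \<in> J \<Longrightarrow> z \<in> J' \<Longrightarrow> J = J'"
  by (meson disjnt_iff pairwise_def)

lemma R_sym: "R A x y \<Longrightarrow> R A y x"
  unfolding R_def by (simp add: min.commute max.commute)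

lemma R_in: "R A x y \<Longrightarrow> \<exists>J\<in>A. expc x \<in> J \<and> expc y \<in> J"
  unfolding R_def by (metis max.cobounded1 max.cobounded2 min.cobounded1 min.cobounded2)

lemma R_refl: "J \<in> A \<Longrightarrow> expc x \<in> J \<Longrightarrow> R A x x"
  unfolding R_def by auto

lemma R_trans:
  assumes d: "disjoint A" and 1: "R A x y" and 2: "R A y z" shows "R A x z"
proof -
  obtain J1 where J1: "J1 \<in> A" "\<And>t. min x y \<le> t \<Longrightarrow> t \<le> max x y \<Longrightarrow> expc t \<in> J1"
    using 1 unfolding R_def by blast
  obtain J2 where J2: "J2 \<in> A" "\<And>t. min y z \<le> t \<Longrightarrow> t \<le> max y z \<Longrightarrow> expc t \<in> J2"
    using 2 unfolding R_def by blast
  have "expc y \<in> J1" "expc y \<in> J2" using J1 J2 by auto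
  then have "J1 = J2" using disj_eq[OF d J1(1) J2(1)] by blast
  have "expc t \<in> J1" if "min x z \<le> t" "t \<le> max x z" for t
  proof -
    have "(min x y \<le> t \<and> t \<le> max x y) \<or> (min y z \<le> t \<and> t \<le> max y z)"
      using that by (auto simp: min_def max_def split: if_splits)
    then show ?thesis using J1 J2 \<open>J1 = J2\<close> by blast
  qed
  then show ?thesis unfolding R_def using J1(1) by blast
qed

lemma R_shift: "R A x y \<Longrightarrow> R A (x + of_int n) (y + of_int n)"
proof -
  assume "R A x y"
  then obtain J where J: "J \<in> A" "\<And>t. min x y \<le> t \<Longrightarrow> t \<le> max x y \<Longrightarrow> expc t \<in> J"
    unfolding R_def by blast
  have "expc t \<in> J" if "min (x + of_int n) (y + of_int n) \<le> t" "t \<le> max (x + of_int n) (y + of_int n)" for t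
  proof -
    have "min x y \<le> t - of_int n" "t - of_int n \<le> max x y" using that by (auto simp: min_def max_def split: if_splits)
    then have "expc (t - of_int n) \<in> J" using J by blast
    moreover have "expc (t - of_int n + of_int n) = expc (t - of_int n)" by (rule expc_shift)
    ultimately show ?thesis by simp
  qed
  then show ?thesis unfolding R_def using J(1) by blast
qed

lemma R_shift1: "R A x y \<Longrightarrow> R A (x + 1) (y + 1)"
  using R_shift[of A x y 1] by simp

lemma R_lt1:
  assumes shape: "\<forall>J\<in>A. (\<exists>z. J = {z}) \<or> open_arc J" and r: "R A x y"
  shows "\<bar>x - y\<bar> < 1"
proof (rule ccontr)
  assume "\<not> \<bar>x - y\<bar> < 1"
  then have big: "min x y + 1 \<le> max x y" by (auto simp: min_def max_def)
  obtain J where J: "J \<in> A" "\<And>t. min x y \<le> t \<Longrightarrow> t \<le> max x y \<Longrightarrow> expc t \<in> J"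
    using r unfolding R_def by blast
  let ?m = "min x y"
  have cov: "\<And>t. ?m \<le> t \<Longrightarrow> t \<le> ?m + 1 \<Longrightarrow> expc t \<in> J" using J big by auto
  have "(\<exists>z. J = {z}) \<or> open_arc J" using shape J(1) by blast
  then show False
  proof
    assume "\<exists>z. J = {z}"
    then obtain z where z: "J = {z}" by blast
    have "expc ?m = expc (?m + 1/2)" using cov[of ?m] cov[of "?m+1/2"] z by auto
    then obtain n :: int where "?m = ?m + 1/2 + of_int n" using expc_eq by blast
    then have "2 * of_int n = (-1::real)" by simp
    then have "2 * n = -1" by linarith
    then show False by presburger
  next
    assume "open_arc J"
    then obtain a b where ab: "a < b" "b - a < 1" "J = expc ` {a<..<b}" unfolding open_arc_def by blast
    define t where "t = a + of_int (\<lceil>?m - a\<rceil>)"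
    have "?m \<le> t" "t \<le> ?m + 1" unfolding t_def by linarith+
    then have "expc t \<in> J" using cov by blast
    moreover have "expc t = expc a" unfolding t_def by (rule expc_shift)
    ultimately obtain s where s: "a < s" "s < b" "expc a = expc s" using ab by auto
    then obtain n :: int where "a = s + of_int n" using expc_eq by blast
    with s ab have "0 < -n" "-n < 1" by linarith+
    then show False by simp
  qed
qed

lemma R_cross:
  assumes d: "disjoint A" and 1: "R A p p'" and 2: "R A q q'" and pq: "p < q" and qp: "q' < p'"
  shows "R A p q"
proof -
  obtain J1 where J1: "J1 \<in> A" "\<And>t. min p p' \<le> t \<Longrightarrow> t \<le> max p p' \<Longrightarrow> expc t \<in> J1"
    using 1 unfolding R_def by blast
  obtain J2 where J2: "J2 \<in> A" "\<And>t. min q q' \<le> t \<Longrightarrow> t \<le> max q q' \<Longrightarrow> expc t \<in> J2"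
    using 2 unfolding R_def by blast
  have "J1 = J2"
  proof (cases "q \<le> p'")
    case True
    then have "expc q \<in> J1" using J1(2)[of q] pq by (auto simp: min_def max_def)
    moreover have "expc q \<in> J2" using J2(2)[of q] by (auto simp: min_def max_def)
    ultimately show ?thesis using disj_eq[OF d J1(1) J2(1)] by blast
  next
    case False
    then have "expc p' \<in> J2" using J2(2)[of p'] qp by (auto simp: min_def max_def)
    moreover have "expc p' \<in> J1" using J1(2)[of p'] by (auto simp: min_def max_def)
    ultimately show ?thesis using disj_eq[OF d J1(1) J2(1)] by blast
  qed
  have "expc t \<in> J1" if "min p q \<le> t" "t \<le> max p q" for t
  proof (cases "t \<le> p'")
    case True
    then show ?thesis using J1(2)[of t] that pq by (auto simp: min_def max_def)
  next
    case False
    then show ?thesis using J2(2)[of t] that pq qp \<open>J1 = J2\<close> by (auto simp: min_def max_def)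
  qed
  then show ?thesis unfolding R_def using J1(1) by blast
qed

lemma mono_between:
  fixes G :: "real \<Rightarrow> real"
  assumes "mono G" "min x y \<le> t" "t \<le> max x y"
  shows "min (G x) (G y) \<le> G t \<and> G t \<le> max (G x) (G y)"
proof (cases "x \<le> y")
  case True
  then have "G x \<le> G t" "G t \<le> G y" using assms by (auto simp: mono_def min_def max_def)
  then show ?thesis by linarith
next
  case False
  then have "G y \<le> G t" "G t \<le> G x" using assms by (auto simp: mono_def min_def max_def)
  then show ?thesis by linarith
qed

lemma R_image:
  assumes L: "is_lift g G" and m: "mono G" and gA: "\<forall>J\<in>A. g ` J \<in> A" and r: "R A x y"
  shows "R A (G x) (G y)"
proof -
  obtain J where J: "J \<in> A" "\<And>t. min x y \<le> t \<Longrightarrow> t \<le> max x y \<Longrightarrow> expc t \<in> J"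
    using r unfolding R_def by blast
  have cont: "continuous_on {min x y..max x y} G"
    using L unfolding is_lift_def by (meson continuous_on_subset subset_UNIV)
  have "expc t \<in> g ` J" if t: "min (G x) (G y) \<le> t" "t \<le> max (G x) (G y)" for t
  proof -
    have "x \<le> y \<Longrightarrow> G x \<le> G y" "y \<le> x \<Longrightarrow> G y \<le> G x" using m by (auto simp: mono_def)
    then have "G (min x y) = min (G x) (G y)" "G (max x y) = max (G x) (G y)"
      by (auto simp: min_def max_def)
    then obtain s where s: "min x y \<le> s" "s \<le> max x y" "G s = t"
      using IVT'[of G "min x y" t "max x y", OF _ _ _ cont] t by (metis min.cobounded1 max.cobounded1 order_trans)
    have "expc t = g (expc s)" using L s(3) unfolding is_lift_def by metis
    then show ?thesis using J(2)[OF s(1,2)] by blast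
  qed
  then show ?thesis unfolding R_def using gA J(1) by blast
qed

lemma R_back:
  assumes L: "is_lift g G" and m: "mono G" and gA: "\<forall>J\<in>A. g ` J \<in> A"
    and inj: "inj_on g S1" and sub: "\<forall>J\<in>A. J \<subseteq> S1" and d: "disjoint A"
    and r: "R A (G u) (G v)" and J0: "J0 \<in> A" "expc u \<in> J0"
  shows "R A u v"
proof -
  obtain K where K: "K \<in> A" "\<And>t. min (G u) (G v) \<le> t \<Longrightarrow> t \<le> max (G u) (G v) \<Longrightarrow> expc t \<in> K"
    using r unfolding R_def by blast
  have "expc (G u) = g (expc u)" using L unfolding is_lift_def by metis
  then have "expc (G u) \<in> g ` J0" using J0 by blast
  moreover have "expc (G u) \<in> K" using K(2)[of "G u"] by (auto simp: min_def max_def)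
  ultimately have KJ: "K = g ` J0" using disj_eq[OF d K(1)] gA J0(1) by blast
  have "expc t \<in> J0" if t: "min u v \<le> t" "t \<le> max u v" for t
  proof -
    have "expc (G t) \<in> K" using K(2) mono_between[OF m t] by blast
    moreover have "expc (G t) = g (expc t)" using L unfolding is_lift_def by metis
    ultimately obtain s where s: "s \<in> J0" "g (expc t) = g s" using KJ by auto
    have "s \<in> S1" using s(1) sub J0(1) by blast
    then have "expc t = s" using inj s(2) unfolding inj_on_def by (meson expc_S1)
    then show ?thesis using s(1) by simp
  qed
  then show ?thesis unfolding R_def using J0(1) by blast
qed

lemma R_any:
  assumes shape: "\<forall>J\<in>A. (\<exists>z. J = {z}) \<or> open_arc J" and K: "K \<in> A" "expc u \<in> K" "expc v \<in> K"
  shows "\<exists>m::int. R A u (v + of_int m)"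
proof -
  from shape K(1) consider "\<exists>z. K = {z}" | "open_arc K" by blast
  then show ?thesis
  proof cases
    case 1
    then have "expc u = expc v" using K by auto
    then obtain n :: int where "u = v + of_int n" using expc_eq by blast
    moreover have "R A u u" using R_refl[OF K(1,2)] .
    ultimately show ?thesis by blast
  next
    case 2
    then obtain a b where ab: "a < b" "b - a < 1" "K = expc ` {a<..<b}" unfolding open_arc_def by blast
    obtain s where s: "a < s" "s < b" "expc u = expc s" using K(2) ab by auto
    obtain s' where s': "a < s'" "s' < b" "expc v = expc s'" using K(3) ab by auto
    obtain j :: int where j: "u = s + of_int j" using s(3) expc_eq by blast
    obtain i :: int where i: "v = s' + of_int i" using s'(3) expc_eq by blast
    have "expc t \<in> K" if t: "min u (v + of_int (j - i)) \<le> t" "t \<le> max u (v + of_int (j - i))" for t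
    proof -
      have "a < t - of_int j" "t - of_int j < b" using t s s' i j by (auto simp: min_def max_def split: if_splits)
      then have "expc (t - of_int j) \<in> K" using ab by auto
      moreover have "expc (t - of_int j + of_int j) = expc (t - of_int j)" by (rule expc_shift)
      ultimately show ?thesis by simp
    qed
    then have "R A u (v + of_int (j - i))" unfolding R_def using K(1) by blast
    then show ?thesis by blast
  qed
qed

lemma lift_some:
  assumes op: "orientation_preserving g"
  defines "G \<equiv> SOME G. is_lift g G"
  shows "is_lift g G" "strict_mono G" "\<And>x. G (x+1) = G x + 1" "inj_on g S1"
proof -
  obtain S where S: "is_lift g S" "strict_mono S" and ch: "circle_homeo g"
    using op unfolding orientation_preserving_def by blast
  show L: "is_lift g G" unfolding G_def using S(1) by (rule someI[where P="\<lambda>G. is_lift g G"])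
  obtain c :: int where c: "\<forall>x. G x = S x + of_int c" using lift_unique[OF S(1) L] by blast
  show sm: "strict_mono G" using S(2) c unfolding strict_mono_def by simp
  show inj: "inj_on g S1" using circle_homeo_inj[OF ch] .
  show "\<And>x. G (x+1) = G x + 1" using lift_shift1[OF L sm inj] .
qed

lemma lim_shift_frac:
  fixes a b :: "nat \<Rightarrow> real" and k :: int
  assumes "(\<lambda>n. a n - (b n + of_int k)) \<longlonglongrightarrow> 0"
  shows "frac (lim a) = frac (lim b)"
proof -
  have eqv: "a \<longlonglongrightarrow> L \<longleftrightarrow> b \<longlonglongrightarrow> L - of_int k" for L
  proof
    assume "a \<longlonglongrightarrow> L"
    from tendsto_diff[OF this assms] have "(\<lambda>n. a n - (a n - (b n + of_int k))) \<longlonglongrightarrow> L" by simp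
    from tendsto_diff[OF this tendsto_const[of "of_int k"]] show "b \<longlonglongrightarrow> L - of_int k" by simp
  next
    assume "b \<longlonglongrightarrow> L - of_int k"
    from tendsto_add[OF this tendsto_const[of "of_int k"]] have "(\<lambda>n. b n + of_int k) \<longlonglongrightarrow> L" by simp
    from tendsto_add[OF this assms] show "a \<longlonglongrightarrow> L" by simp
  qed
  show ?thesis
  proof (cases "\<exists>M. b \<longlonglongrightarrow> M")
    case True
    then obtain M where M: "b \<longlonglongrightarrow> M" by blast
    then have "a \<longlonglongrightarrow> M + of_int k" using eqv by simp
    then have "lim a = M + of_int k" by (rule limI)
    moreover have "lim b = M" using M by (rule limI)
    ultimately show ?thesis by simp
  next
    case False
    then have "\<not> a \<longlonglongrightarrow> L" for L using eqv by blast
    then have "(\<lambda>L. a \<longlonglongrightarrow> L) = (\<lambda>L. b \<longlonglongrightarrow> L)" using False by blast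
    then show ?thesis unfolding lim_def by simp
  qed
qed

theorem mainTheorem4:
  fixes A :: "complex set set" and h :: "complex set \<Rightarrow> complex set"
    and g1 g2 :: "complex \<Rightarrow> complex"
  assumes sub: "\<forall>J\<in>A. J \<subseteq> S1"
    and disj: "disjoint A"
    and nonempty: "\<forall>J\<in>A. J \<noteq> {}"
    and conn: "\<forall>J\<in>A. connected J"
    and card3: "infinite A \<or> card A \<ge> 3"
    and dense: "S1 \<subseteq> closure (\<Union>A)"
    and shape: "\<forall>J\<in>A. (\<exists>z. J = {z}) \<or> open_arc J"
    and hbij: "bij_betw h A A"
    and hord: "order_preserving A h"
    and g1: "orientation_preserving g1" "compatible g1 A h"
    and g2: "orientation_preserving g2" "compatible g2 A h"
  shows "rotation_number g1 = rotation_number g2"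
proof -
  define G1 where "G1 = (SOME G. is_lift g1 G)"
  define G2 where "G2 = (SOME G. is_lift g2 G)"
  note l1 = lift_some[OF g1(1), folded G1_def]
  note l2 = lift_some[OF g2(1), folded G2_def]
  have hA: "h J \<in> A" if "J \<in> A" for J using hbij that by (meson bij_betw_apply)
  have e1: "g1 ` J = h J" if "J \<in> A" for J using g1(2) that unfolding compatible_def by blast
  have e2: "g2 ` J = h J" if "J \<in> A" for J using g2(2) that unfolding compatible_def by blast
  have g1A: "\<forall>J\<in>A. g1 ` J \<in> A" using e1 hA by simp
  have g2A: "\<forall>J\<in>A. g2 ` J \<in> A" using e2 hA by simp
  have m1: "mono G1" using l1(2) by (rule strict_mono_mono)
  have over1: "expc (G1 y) \<in> h J" if "J \<in> A" "expc y \<in> J" for y J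
  proof -
    have "expc (G1 y) = g1 (expc y)" using l1(1) unfolding is_lift_def by metis
    then show ?thesis using e1[OF that(1)] that(2) by blast
  qed
  have over2: "expc (G2 y) \<in> h J" if "J \<in> A" "expc y \<in> J" for y J
  proof -
    have "expc (G2 y) = g2 (expc y)" using l2(1) unfolding is_lift_def by metis
    then show ?thesis using e2[OF that(1)] that(2) by blast
  qed
  have "A \<noteq> {}" using card3 by auto
  then obtain J0 where J0A: "J0 \<in> A" by blast
  then obtain z where "z \<in> J0" using nonempty by blast
  then have "z \<in> S1" using sub J0A by blast
  then obtain x where x: "expc x = z" using expc_surj by blast
  define x0 where "x0 = x + of_int (- \<lfloor>x\<rfloor>)"
  have "expc x0 = expc x" unfolding x0_def by (rule expc_shift)
  then have x0J: "expc x0 \<in> J0" using x \<open>z \<in> J0\<close> by simp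
  have x0b: "0 \<le> x0" "x0 < 1" unfolding x0_def by linarith+
  obtain k :: int where k: "R A (G1 x0) (G2 x0 + of_int k)"
    using R_any[OF shape hA[OF J0A] over1[OF J0A x0J] over2[OF J0A x0J]] by blast
  define H where "H t = G2 t + of_int k" for t
  have LH: "is_lift g2 H"
  proof -
    have "continuous_on UNIV G2" using l2(1) unfolding is_lift_def by blast
    then have "continuous_on UNIV H" unfolding H_def by (intro continuous_intros)
    moreover have "g2 (expc t) = expc (H t)" for t
      using l2(1) unfolding is_lift_def H_def by simp
    ultimately show ?thesis unfolding is_lift_def by blast
  qed
  have smH: "strict_mono H" using l2(2) unfolding strict_mono_def H_def by simp
  have mH: "mono H" using smH by (rule strict_mono_mono)
  have shH: "H (t+1) = H t + 1" for t using l2(3) unfolding H_def by simp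
  have base: "R A (G1 x0) (H x0)" using k unfolding H_def .
  have Q0: "R A (G1 y) (H y)" if yJ: "J \<in> A" "expc y \<in> J" and yb: "x0 \<le> y" "y < x0 + 1" for y J
  proof (cases "y = x0")
    case True then show ?thesis using base by simp
  next
    case False
    with yb have y1: "x0 < y" by simp
    have o2: "expc (H y) \<in> h J" using over2[OF yJ] unfolding H_def by simp
    obtain m :: int where m: "R A (G1 y) (H y + of_int m)"
      using R_any[OF shape hA[OF yJ(1)] over1[OF yJ] o2] by blast
    have a1: "G1 x0 < G1 y" using l1(2) y1 by (simp add: strict_mono_less)
    have a2: "G1 y < G1 x0 + 1" using l1(2) yb(2) l1(3)[of x0] by (metis strict_mono_less)
    have b1: "H x0 < H y" using smH y1 by (simp add: strict_mono_less)
    have b2: "H y < H x0 + 1" using smH yb(2) shH[of x0] by (metis strict_mono_less)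
    consider "m = 0" | "m \<ge> 1" | "m \<le> -1" by linarith
    then show ?thesis
    proof cases
      case 1 then show ?thesis using m by simp
    next
      case 2
      have q: "R A (G1 x0 + 1) (H x0 + 1)" using R_shift1[OF base] .
      have "H x0 + 1 < H y + of_int m" using b1 2 by linarith
      then have "R A (G1 y) (G1 x0 + 1)" using R_cross[OF disj m q a2] by blast
      then have r1: "R A (G1 y) (G1 (x0 + 1))" using l1(3) by simp
      then have "R A y (x0 + 1)" using R_back[OF l1(1) m1 g1A l1(4) sub disj r1 yJ] by blast
      then have r2: "R A (H (x0+1)) (H y)" using R_image[OF LH mH g2A] R_sym by blast
      have r3: "R A (G1 (x0+1)) (H (x0+1))" using q l1(3) shH by simp
      show ?thesis using R_trans[OF disj R_trans[OF disj r1 r3] r2] .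
    next
      case 3
      have "H y + of_int m < H x0" using b2 3 by linarith
      then have r1: "R A (G1 x0) (G1 y)" using R_cross[OF disj base m a1] by blast
      then have "R A x0 y" using R_back[OF l1(1) m1 g1A l1(4) sub disj r1 J0A x0J] by blast
      then have r2: "R A (H x0) (H y)" using R_image[OF LH mH g2A] by blast
      show ?thesis using R_trans[OF disj R_trans[OF disj R_sym[OF r1] base] r2] .
    qed
  qed
  have Q: "R A (G1 y) (H y)" if yJ: "J \<in> A" "expc y \<in> J" for y J
  proof -
    define j where "j = \<lfloor>y - x0\<rfloor>"
    define y' where "y' = y + of_int (- j)"
    have "expc y' = expc y" unfolding y'_def by (rule expc_shift)
    then have "expc y' \<in> J" using yJ by simp
    moreover have "x0 \<le> y'" "y' < x0 + 1" unfolding y'_def j_def by linarith+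
    ultimately have "R A (G1 y') (H y')" using Q0 yJ(1) by blast
    then have "R A (G1 y' + of_int j) (H y' + of_int j)" by (rule R_shift)
    moreover have "G1 y' + of_int j = G1 y" using shift_int[where G=G1, OF l1(3), of y' j]
      unfolding y'_def by simp
    moreover have "H y' + of_int j = H y" using shift_int[where G=H, OF shH, of y' j]
      unfolding y'_def by simp
    ultimately show ?thesis by simp
  qed
  have iter: "R A ((G1^^n) x0) ((H^^n) x0)" for n
  proof (induction n)
    case 0 then show ?case using R_refl[OF J0A x0J] by simp
  next
    case (Suc n)
    let ?u = "(G1^^n) x0" and ?v = "(H^^n) x0"
    have r1: "R A (G1 ?u) (G1 ?v)" using R_image[OF l1(1) m1 g1A Suc] .
    obtain J where "J \<in> A" "expc ?v \<in> J" using R_in[OF R_sym[OF Suc]] by blast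
    then have "R A (G1 ?v) (H ?v)" using Q by blast
    then show ?case using R_trans[OF disj r1] by simp
  qed
  have Hn: "(H^^n) x0 = (G2^^n) x0 + of_int (int n * k)" for n
  proof (induction n)
    case 0 then show ?case by simp
  next
    case (Suc n)
    have "(H^^Suc n) x0 = H ((G2^^n) x0 + of_int (int n * k))"
      using Suc by simp
    also have "\<dots> = G2 ((G2^^n) x0 + of_int (int n * k)) + of_int k"
      by (simp only: H_def)
    also have "\<dots> = (G2^^Suc n) x0 + of_int (int n * k) + of_int k"
      using shift_int[where G=G2, OF l2(3), of "(G2^^n) x0" "int n * k"] by simp
    finally show ?case by (simp add: algebra_simps)
  qed
  have bnd: "\<bar>(G1^^n) 0 - ((G2^^n) 0 + real n * of_int k)\<bar> \<le> 3" for n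
  proof -
    have "\<bar>(G1^^n) x0 - (H^^n) x0\<bar> < 1" using R_lt1[OF shape iter] .
    moreover have "(G1^^n) 0 \<le> (G1^^n) x0" "(G1^^n) x0 \<le> (G1^^n) (0+1)"
      using iter_mono[OF m1, of n] x0b unfolding mono_def by auto
    moreover have "(G2^^n) 0 \<le> (G2^^n) x0" "(G2^^n) x0 \<le> (G2^^n) (0+1)"
      using iter_mono[OF strict_mono_mono[OF l2(2)], of n] x0b unfolding mono_def by auto
    moreover have "(G1^^n) (0+1) = (G1^^n) 0 + 1" by (rule iter_shift1[where G=G1, OF l1(3)])
    moreover have "(G2^^n) (0+1) = (G2^^n) 0 + 1" by (rule iter_shift1[where G=G2, OF l2(3)])
    ultimately show ?thesis using Hn[of n] by simp
  qed
  define a where "a n = (G1^^n) 0 / real n" for n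
  define b where "b n = (G2^^n) 0 / real n" for n
  have "(\<lambda>n. a n - (b n + of_int k)) \<longlonglongrightarrow> 0"
  proof (rule Lim_null_comparison[OF _ lim_const_over_n[of "3::real"]])
    show "\<forall>\<^sub>F n in sequentially. norm (a n - (b n + of_int k)) \<le> 3 / real n"
    proof (rule eventually_sequentiallyI[of 1])
      fix n :: nat assume "1 \<le> n"
      then have np: "real n > 0" by simp
      have "a n - (b n + of_int k) = ((G1^^n) 0 - ((G2^^n) 0 + real n * of_int k)) / real n"
        unfolding a_def b_def using np by (simp add: field_simps)
      then have "norm (a n - (b n + of_int k)) = \<bar>(G1^^n) 0 - ((G2^^n) 0 + real n * of_int k)\<bar> / real n"
        using np by simp
      also have "\<dots> \<le> 3 / real n" using bnd[of n] np by (simp add: divide_right_mono)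
      finally show "norm (a n - (b n + of_int k)) \<le> 3 / real n" .
    qed
  qed
  then have "frac (lim a) = frac (lim b)" by (rule lim_shift_frac)
  then show ?thesis unfolding rotation_number_def G1_def[symmetric] G2_def[symmetric] a_def b_def .
qed

end
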